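(* (1) The mapping $F\colon(\mathcal{H}\times\mathcal{H})\setminus\Delta\to T^*\mathcal{H}$ defined by \begin{equation} F(p,q)=(q,\alpha_{(p,q)}) \end{equation} provides a diffeomorphism between $(\mathcal{H}\times\mathcal{H})\setminus\Delta$ and $T^*\mathcal{H}\setminus 0_\mathcal{H}$, where $0_\mathcal{H}$ denotes the zero section. (2) The real part of $\Omega_{\mathcal{H}}$ is equal to the pullback of the canonical symplectic form on $T^*\mathcal{H}$ by $F$.
   Context: $\mathcal{H}=\mathbb{C}\times\mathbb{R}$ is the 3-dimensional Heisenberg group with coordinates $(z,u)=(x,y,u)$ and group law $(z,u)\cdot(z',u')=(z+z',u+u'-\tfrac{1}{2}\Im(z\overline{z'}))$; $\Delta$ is the diagonal of $\mathcal{H}\times\mathcal{H}$. For $p=(z,u)$ let $A(p)=|z|^2-4iu$, and $\rho(p,q)=A(p^{-1}q)$. Define the complex 2-form $\Omega_{\mathcal{H}}=d_pd_q\log\rho$ and the real 1-form $\alpha=\Re d_q\log\rho$ on $(\mathcal{H}\times\mathcal{H})\setminus\Delta$ (here $d_p,d_q$ are exterior derivatives in the first and second factors); for fixed $p$, $\alpha_{(p,\cdot)}$ is a 1-form on $\mathcal{H}\setminus\{p\}$, so $\alpha_{(p,q)}\in T^*_q\mathcal{H}$. *)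

theory Defs
  imports "HOL-Analysis.Analysis"
begin

type_synonym heis = "complex \<times> real"

definition heis_mult :: "heis \<Rightarrow> heis \<Rightarrow> heis" where
  "heis_mult = (\<lambda>(z,u) (z',u'). (z + z', u + u' - Im (z * cnj z') / 2))"

definition heis_inv :: "heis \<Rightarrow> heis" where
  "heis_inv = (\<lambda>(z,u). (-z, -u))"

definition heis_A :: "heis \<Rightarrow> complex" where
  "heis_A = (\<lambda>(z,u). complex_of_real ((cmod z)^2) - 4 * \<i> * complex_of_real u)"

definition heis_rho :: "heis \<Rightarrow> heis \<Rightarrow> complex" where
  "heis_rho p q = heis_A (heis_mult (heis_inv p) q)"

text \<open>log rho on (H x H) minus diagonal; rho has nonnegative real part and is nonzero
  there, so the principal logarithm is smooth; only derivatives of it are used.\<close>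
definition logrho :: "heis \<times> heis \<Rightarrow> complex" where
  "logrho = (\<lambda>(p,q). Ln (heis_rho p q))"

definition d_p :: "(heis \<times> heis \<Rightarrow> 'b::real_normed_vector) \<Rightarrow> heis \<times> heis \<Rightarrow> heis \<Rightarrow> 'b" where
  "d_p f = (\<lambda>(p,q) a. frechet_derivative (\<lambda>p'. f (p', q)) (at p) a)"

definition d_q :: "(heis \<times> heis \<Rightarrow> 'b::real_normed_vector) \<Rightarrow> heis \<times> heis \<Rightarrow> heis \<Rightarrow> 'b" where
  "d_q f = (\<lambda>(p,q) b. frechet_derivative (\<lambda>q'. f (p, q')) (at q) b)"

text \<open>Omega_H = d_p d_q log rho, as an alternating bilinear form on tangent vectors
  (a,b), (a',b') of H x H: sum of d^2 f/dp_i dq_j (dp_i wedge dq_j).\<close>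
definition Omega_H :: "heis \<times> heis \<Rightarrow> heis \<times> heis \<Rightarrow> heis \<times> heis \<Rightarrow> complex" where
  "Omega_H = (\<lambda>pq (a,b) (a',b').
      d_p (\<lambda>x. d_q logrho x b') pq a - d_p (\<lambda>x. d_q logrho x b) pq a')"

definition alpha_H :: "heis \<times> heis \<Rightarrow> heis \<Rightarrow> real" where
  "alpha_H pq w = Re (d_q logrho pq w)"

text \<open>Cotangent vectors at a point of H are identified with their component vectors
  (w.r.t. the coordinate basis dx, dy, du), i.e. T^*H = H x R^3.\<close>
definition covec :: "(heis \<Rightarrow> real) \<Rightarrow> heis" where
  "covec l = (\<Sum>b\<in>Basis. l b *\<^sub>R b)"

definition F_H :: "heis \<times> heis \<Rightarrow> heis \<times> heis" where
  "F_H = (\<lambda>(p,q). (q, covec (alpha_H (p,q))))"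

text \<open>Canonical symplectic form omega = d theta = sum d xi_i wedge d x_i on T^*H.\<close>
definition canonical_symplectic :: "heis \<times> heis \<Rightarrow> heis \<times> heis \<Rightarrow> heis \<times> heis \<Rightarrow> real" where
  "canonical_symplectic = (\<lambda>_ (X1,\<Xi>1) (X2,\<Xi>2). \<Xi>1 \<bullet> X2 - \<Xi>2 \<bullet> X1)"

definition pullback2 ::
  "('a::real_normed_vector \<Rightarrow> 'b::real_normed_vector) \<Rightarrow> ('b \<Rightarrow> 'b \<Rightarrow> 'b \<Rightarrow> real) \<Rightarrow> 'a \<Rightarrow> 'a \<Rightarrow> 'a \<Rightarrow> real" where
  "pullback2 F \<omega> x v w = \<omega> (F x) (frechet_derivative F (at x) v) (frechet_derivative F (at x) w)"

fun higher_differentiable_on ::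
  "'a::real_normed_vector set \<Rightarrow> ('a \<Rightarrow> 'b::real_normed_vector) \<Rightarrow> nat \<Rightarrow> bool" where
  "higher_differentiable_on S f 0 = continuous_on S f"
| "higher_differentiable_on S f (Suc n) =
     (f differentiable_on S \<and>
      (\<forall>v. higher_differentiable_on S (\<lambda>x. frechet_derivative f (at x) v) n))"

definition smooth_on :: "'a::real_normed_vector set \<Rightarrow> ('a \<Rightarrow> 'b::real_normed_vector) \<Rightarrow> bool" where
  "smooth_on S f \<longleftrightarrow> (\<forall>n. higher_differentiable_on S f n)"

definition diffeomorphism_betw ::
  "'a::real_normed_vector set \<Rightarrow> 'b::real_normed_vector set \<Rightarrow> ('a \<Rightarrow> 'b) \<Rightarrow> bool" where
  "diffeomorphism_betw S T f \<longleftrightarrow>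
     smooth_on S f \<and> f ` S = T \<and>
     (\<exists>g. smooth_on T g \<and> g ` T = S \<and> (\<forall>x\<in>S. g (f x) = x) \<and> (\<forall>y\<in>T. f (g y) = y))"

end

theory Submission
  imports Defs
begin


abbreviation hd where "hd S f n \<equiv> higher_differentiable_on S f n"

lemma fd_eq: "(f has_derivative f') (at x) \<Longrightarrow> frechet_derivative f (at x) = f'"
  using frechet_derivative_at by metis

lemma hd_SucD: "hd S f (Suc n) \<Longrightarrow> hd S f n"
proof (induction n arbitrary: f)
  case 0
  then show ?case by (simp add: differentiable_imp_continuous_on)
next
  case (Suc n)
  then show ?case by auto
qed

lemma fdw: "f differentiable F \<Longrightarrow> (f has_derivative frechet_derivative f F) F"
  using frechet_derivative_works by blast

lemma hd_transfer:
  assumes "open S" "\<And>x. x \<in> S \<Longrightarrow> f x = g x" "hd S f n"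
  shows "hd S g n"
  using assms(2,3)
proof (induction n arbitrary: f g)
  case 0
  then show ?case using continuous_on_cong by fastforce
next
  case (Suc n)
  have dif: "f differentiable at x" if "x \<in> S" for x
    using Suc.prems(2) that assms(1) by (simp add: differentiable_on_eq_differentiable_at)
  have hg: "(g has_derivative frechet_derivative f (at x)) (at x)" if "x \<in> S" for x
    by (rule has_derivative_transform_within_open[OF fdw[OF dif[OF that]] assms(1) that])
      (rule Suc.prems(1))
  have eq: "frechet_derivative g (at x) = frechet_derivative f (at x)" if "x \<in> S" for x
    using hg[OF that] by (rule fd_eq)
  have "g differentiable_on S"
    unfolding differentiable_on_eq_differentiable_at[OF assms(1)]
    using hg differentiableI by blast
  moreover have "hd S (\<lambda>x. frechet_derivative g (at x) v) n" for v
    by (rule Suc.IH[of "\<lambda>x. frechet_derivative f (at x) v"]) (use Suc.prems eq in auto)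
  ultimately show ?case by simp
qed

lemma hd_const: "hd S (\<lambda>x. c) n"
proof (induction n arbitrary: c)
  case 0
  then show ?case by simp
next
  case (Suc n)
  have "frechet_derivative (\<lambda>x. c) (at x) = (\<lambda>v. 0)" for x
    by (rule fd_eq) simp
  then show ?case using Suc by simp
qed

lemma hd_linear: "bounded_linear L \<Longrightarrow> hd S L n"
proof (induction n)
  case 0
  then show ?case by (simp add: linear_continuous_on)
next
  case (Suc n)
  have "frechet_derivative L (at x) = L" for x
    by (rule fd_eq) (simp add: Suc.prems bounded_linear_imp_has_derivative)
  then show ?case using Suc
    by (simp add: bounded_linear_imp_differentiable_on hd_const)
qed

lemma hd_linear_comp:
  assumes "open S" "bounded_linear L" "hd S f n"
  shows "hd S (\<lambda>x. L (f x)) n"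
  using assms(3)
proof (induction n arbitrary: f)
  case 0
  then show ?case using assms(2) linear_continuous_on continuous_on_compose2[of UNIV L S f] by auto
next
  case (Suc n)
  have dif: "f differentiable at x" if "x \<in> S" for x
    using Suc.prems that assms(1) by (simp add: differentiable_on_eq_differentiable_at)
  have eq: "frechet_derivative (\<lambda>x. L (f x)) (at x) = (\<lambda>v. L (frechet_derivative f (at x) v))" if "x \<in> S" for x
    by (rule fd_eq) (rule bounded_linear.has_derivative[OF assms(2) fdw[OF dif[OF that]]])
  have "(\<lambda>x. L (f x)) differentiable_on S"
    unfolding differentiable_on_eq_differentiable_at[OF assms(1)]
    using bounded_linear.has_derivative[OF assms(2) fdw[OF dif]] differentiableI by blast
  moreover have "hd S (\<lambda>x. frechet_derivative (\<lambda>x. L (f x)) (at x) v) n" for v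
    by (rule hd_transfer[OF assms(1), of "\<lambda>x. L (frechet_derivative f (at x) v)"]) (use Suc eq in auto)
  ultimately show ?case by simp
qed

lemma hd_add:
  assumes "open S"
  shows "hd S f n \<Longrightarrow> hd S g n \<Longrightarrow> hd S (\<lambda>x. f x + g x) n"
proof (induction n arbitrary: f g)
  case 0
  then show ?case by (simp add: continuous_on_add)
next
  case (Suc n)
  have dif: "f differentiable at x" "g differentiable at x" if "x \<in> S" for x
    using Suc.prems that assms(1) by (simp_all add: differentiable_on_eq_differentiable_at)
  have eq: "frechet_derivative (\<lambda>x. f x + g x) (at x) = (\<lambda>v. frechet_derivative f (at x) v + frechet_derivative g (at x) v)" if "x \<in> S" for x
    by (rule fd_eq) (rule has_derivative_add[OF fdw[OF dif(1)[OF that]] fdw[OF dif(2)[OF that]]])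
  have "(\<lambda>x. f x + g x) differentiable_on S"
    using Suc.prems by (simp add: differentiable_on_add)
  moreover have "hd S (\<lambda>x. frechet_derivative (\<lambda>x. f x + g x) (at x) v) n" for v
    by (rule hd_transfer[OF assms(1), of "\<lambda>x. frechet_derivative f (at x) v + frechet_derivative g (at x) v"]) (use Suc eq in auto)
  ultimately show ?case by simp
qed

lemma hd_bilinear:
  assumes "open S" "bounded_bilinear bl"
  shows "hd S f n \<Longrightarrow> hd S g n \<Longrightarrow> hd S (\<lambda>x. bl (f x) (g x)) n"
proof (induction n arbitrary: f g)
  case 0
  then show ?case by (simp add: bounded_bilinear.continuous_on[OF assms(2)])
next
  case (Suc n)
  have dif: "f differentiable at x" "g differentiable at x" if "x \<in> S" for x
    using Suc.prems that assms(1) by (simp_all add: differentiable_on_eq_differentiable_at)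
  have eq: "frechet_derivative (\<lambda>x. bl (f x) (g x)) (at x) = (\<lambda>v. bl (f x) (frechet_derivative g (at x) v) + bl (frechet_derivative f (at x) v) (g x))" if "x \<in> S" for x
    by (rule fd_eq) (rule bounded_bilinear.FDERIV[OF assms(2) fdw[OF dif(1)[OF that]] fdw[OF dif(2)[OF that]]])
  have "(\<lambda>x. bl (f x) (g x)) differentiable_on S"
    unfolding differentiable_on_eq_differentiable_at[OF assms(1)]
    using bounded_bilinear.FDERIV[OF assms(2) fdw[OF dif(1)] fdw[OF dif(2)]] differentiableI by blast
  moreover have "hd S (\<lambda>x. frechet_derivative (\<lambda>x. bl (f x) (g x)) (at x) v) n" for v
  proof -
    have "hd S (\<lambda>x. bl (f x) (frechet_derivative g (at x) v) + bl (frechet_derivative f (at x) v) (g x)) n"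
      by (rule hd_add[OF assms(1)]) (rule Suc.IH; use Suc.prems hd_SucD in auto)+
    then show ?thesis by (rule hd_transfer[OF assms(1), rotated]) (simp add: eq)
  qed
  ultimately show ?case by simp
qed

lemma hd_sum:
  fixes f :: "'i \<Rightarrow> 'a::real_normed_vector \<Rightarrow> 'b::real_normed_vector" and I :: "'i set"
  assumes "open S" "finite I"
  shows "(\<And>i. i \<in> I \<Longrightarrow> hd S (f i) n) \<Longrightarrow> hd S (\<lambda>x. \<Sum>i\<in>I. f i x) n"
  using assms(2)
proof (induction I rule: finite_induct)
  case empty
  then show ?case by (simp add: hd_const)
next
  case (insert a F)
  have "hd S (\<lambda>x. f a x + (\<Sum>i\<in>F. f i x)) n"
    by (rule hd_add[OF assms(1)]) (use insert in auto)
  then show ?case using insert by simp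
qed


lemma linear_basis_expand:
  fixes h :: "'b::euclidean_space \<Rightarrow> 'c::real_vector"
  assumes "linear h"
  shows "h y = (\<Sum>b\<in>Basis. (y \<bullet> b) *\<^sub>R h b)"
proof -
  have "h y = h (\<Sum>b\<in>Basis. (y \<bullet> b) *\<^sub>R b)" by (simp add: euclidean_representation)
  also have "\<dots> = (\<Sum>b\<in>Basis. (y \<bullet> b) *\<^sub>R h b)"
    by (simp add: linear_sum[OF assms] linear_scale[OF assms])
  finally show ?thesis .
qed

lemma hd_compose:
  fixes f :: "'a::real_normed_vector \<Rightarrow> 'b::euclidean_space" and g :: "'b \<Rightarrow> 'c::real_normed_vector"
  assumes "open S" "open T"
  shows "f ` S \<subseteq> T \<Longrightarrow> hd S f n \<Longrightarrow> hd T g n \<Longrightarrow> hd S (\<lambda>x. g (f x)) n"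
proof (induction n arbitrary: f g)
  case 0
  then show ?case by (auto intro!: continuous_on_compose2[of T g S f])
next
  case (Suc n)
  have dif: "f differentiable at x" if "x \<in> S" for x
    using Suc.prems that assms(1) by (simp_all add: differentiable_on_eq_differentiable_at)
  have difg: "g differentiable at (f x)" if "x \<in> S" for x
    using Suc.prems that assms by (auto simp: differentiable_on_eq_differentiable_at)
  have hc: "((\<lambda>x. g (f x)) has_derivative (\<lambda>v. frechet_derivative g (at (f x)) (frechet_derivative f (at x) v))) (at x)"
    if "x \<in> S" for x
    by (rule has_derivative_compose[OF fdw[OF dif[OF that]] fdw[OF difg[OF that]]])
  have eq: "frechet_derivative (\<lambda>x. g (f x)) (at x) = (\<lambda>v. \<Sum>b\<in>Basis. (frechet_derivative f (at x) v \<bullet> b) *\<^sub>R frechet_derivative g (at (f x)) b)"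
    if "x \<in> S" for x
  proof -
    have "linear (frechet_derivative g (at (f x)))"
      using fdw[OF difg[OF that]] has_derivative_linear by blast
    then show ?thesis using fd_eq[OF hc[OF that]] linear_basis_expand by metis
  qed
  have "(\<lambda>x. g (f x)) differentiable_on S"
    unfolding differentiable_on_eq_differentiable_at[OF assms(1)]
    using hc differentiableI by blast
  moreover have "hd S (\<lambda>x. frechet_derivative (\<lambda>x. g (f x)) (at x) v) n" for v
  proof -
    have "hd S (\<lambda>x. \<Sum>b\<in>Basis. (frechet_derivative f (at x) v \<bullet> b) *\<^sub>R frechet_derivative g (at (f x)) b) n"
    proof (rule hd_sum[OF assms(1) finite_Basis])
      fix b :: 'b
      have 1: "hd S (\<lambda>x. frechet_derivative f (at x) v \<bullet> b) n"
        by (rule hd_linear_comp[OF assms(1) bounded_linear_inner_left]) (use Suc.prems in simp)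
      have 2: "hd S (\<lambda>x. frechet_derivative g (at (f x)) b) n"
        by (rule Suc.IH[of f "\<lambda>y. frechet_derivative g (at y) b", OF Suc.prems(1) hd_SucD[OF Suc.prems(2)]]) (use Suc.prems(3) in simp)
      show "hd S (\<lambda>x. (frechet_derivative f (at x) v \<bullet> b) *\<^sub>R frechet_derivative g (at (f x)) b) n"
        by (rule hd_bilinear[OF assms(1) bounded_bilinear_scaleR 1 2])
    qed
    then show ?thesis by (rule hd_transfer[OF assms(1), rotated]) (simp add: eq)
  qed
  ultimately show ?case by simp
qed

lemma hd_inverse: "hd (-{0}) (inverse :: 'a::real_normed_field \<Rightarrow> 'a) n"
proof (induction n)
  case 0
  then show ?case by (simp add: continuous_on_inverse continuous_on_id)
next
  case (Suc n)
  have o: "open (-{0::'a})" by auto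
  have hd': "((inverse :: 'a \<Rightarrow> 'a) has_derivative (\<lambda>h. - (inverse x * h * inverse x))) (at x)" if "x \<noteq> 0" for x
    using has_derivative_inverse'[OF that] by blast
  have "(inverse :: 'a \<Rightarrow> 'a) differentiable_on (-{0})"
    unfolding differentiable_on_eq_differentiable_at[OF o]
    using hd' differentiableI by blast
  moreover have "hd (-{0}) (\<lambda>x. frechet_derivative (inverse :: 'a \<Rightarrow> 'a) (at x) v) n" for v
  proof -
    have a: "hd (-{0}) (\<lambda>x::'a. inverse x * v) n"
      by (rule hd_bilinear[OF o bounded_bilinear_mult Suc hd_const])
    have "hd (-{0}) (\<lambda>x::'a. - ((inverse x * v) * inverse x)) n"
      by (rule hd_linear_comp[OF o bounded_linear_minus[OF bounded_linear_ident]])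
        (rule hd_bilinear[OF o bounded_bilinear_mult a Suc])
    then show ?thesis by (rule hd_transfer[OF o, rotated]) (simp add: fd_eq[OF hd'])
  qed
  ultimately show ?case by simp
qed

lemma hd_inverse_comp:
  fixes f :: "'a::real_normed_vector \<Rightarrow> 'b::{real_normed_field,euclidean_space}"
  assumes "open S" "hd S f n" "\<And>x. x \<in> S \<Longrightarrow> f x \<noteq> 0"
  shows "hd S (\<lambda>x. inverse (f x)) n"
  by (rule hd_compose[OF assms(1) _ _ assms(2) hd_inverse]) (use assms(3) in auto)

lemma hd_mult:
  fixes f g :: "'a::real_normed_vector \<Rightarrow> 'b::real_normed_algebra"
  shows "open S \<Longrightarrow> hd S f n \<Longrightarrow> hd S g n \<Longrightarrow> hd S (\<lambda>x. f x * g x) n"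
  using hd_bilinear[OF _ bounded_bilinear_mult] by blast

lemma hd_pair:
  assumes "open S" "hd S f n" "hd S g n"
  shows "hd S (\<lambda>x. (f x, g x)) n"
proof -
  have "hd S (\<lambda>x. (f x, 0) + (0, g x)) n"
    by (rule hd_add[OF assms(1)])
      (rule hd_linear_comp[OF assms(1) _ assms(2)] hd_linear_comp[OF assms(1) _ assms(3)];
       intro bounded_linear_Pair bounded_linear_ident bounded_linear_zero)+
  then show ?thesis by simp
qed


named_theorems hd_intros

lemma hd_id[hd_intros]: "hd S (\<lambda>x. x) n"
  by (rule hd_linear[OF bounded_linear_ident])

lemmas [hd_intros] = hd_const

lemma hd_fst[hd_intros]: "open S \<Longrightarrow> hd S f n \<Longrightarrow> hd S (\<lambda>x. fst (f x)) n"
  by (rule hd_linear_comp[OF _ bounded_linear_fst])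
lemma hd_snd[hd_intros]: "open S \<Longrightarrow> hd S f n \<Longrightarrow> hd S (\<lambda>x. snd (f x)) n"
  by (rule hd_linear_comp[OF _ bounded_linear_snd])
lemma hd_cnj[hd_intros]: "open S \<Longrightarrow> hd S f n \<Longrightarrow> hd S (\<lambda>x. cnj (f x)) n"
  by (rule hd_linear_comp[OF _ bounded_linear_cnj])
lemma hd_Re[hd_intros]: "open S \<Longrightarrow> hd S f n \<Longrightarrow> hd S (\<lambda>x. Re (f x)) n"
  by (rule hd_linear_comp[OF _ bounded_linear_Re])
lemma hd_Im[hd_intros]: "open S \<Longrightarrow> hd S f n \<Longrightarrow> hd S (\<lambda>x. Im (f x)) n"
  by (rule hd_linear_comp[OF _ bounded_linear_Im])
lemma hd_of_real[hd_intros]: "open S \<Longrightarrow> hd S f n \<Longrightarrow> hd S (\<lambda>x. complex_of_real (f x)) n"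
  by (rule hd_linear_comp[OF _ bounded_linear_of_real])
lemma hd_uminus[hd_intros]: "open S \<Longrightarrow> hd S f n \<Longrightarrow> hd S (\<lambda>x. - f x) n"
  by (rule hd_linear_comp[OF _ bounded_linear_minus[OF bounded_linear_ident]])
lemma hd_divc[hd_intros]:
  fixes f :: "'a::real_normed_vector \<Rightarrow> 'b::real_normed_field"
  shows "open S \<Longrightarrow> hd S f n \<Longrightarrow> hd S (\<lambda>x. f x / c) n"
  by (rule hd_linear_comp[OF _ bounded_linear_divide])
lemmas [hd_intros] = hd_add hd_mult hd_pair
lemma hd_diff[hd_intros]: "open S \<Longrightarrow> hd S f n \<Longrightarrow> hd S g n \<Longrightarrow> hd S (\<lambda>x. f x - g x) n"
  using hd_add[of S f n "\<lambda>x. - g x"] hd_uminus[of S g n] by simp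
lemmas [hd_intros] = hd_inverse_comp



definition rhoE :: "heis \<Rightarrow> heis \<Rightarrow> complex" where
  "rhoE p q = (fst q - fst p) * cnj (fst q - fst p)
     - 4 * \<i> * complex_of_real (snd q - snd p + Im (fst p * cnj (fst q)) / 2)"

definition DqRho :: "heis \<Rightarrow> heis \<Rightarrow> heis \<Rightarrow> complex" where
  "DqRho p q b = fst b * cnj (fst q - fst p) + (fst q - fst p) * cnj (fst b)
     - 4 * \<i> * complex_of_real (snd b + Im (fst p * cnj (fst b)) / 2)"

definition DpRho :: "heis \<Rightarrow> heis \<Rightarrow> heis \<Rightarrow> complex" where
  "DpRho p q a = - (fst a * cnj (fst q - fst p)) - (fst q - fst p) * cnj (fst a)
     - 4 * \<i> * complex_of_real (- snd a + Im (fst a * cnj (fst q)) / 2)"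

lemma heis_rho_eq: "heis_rho p q = rhoE p q"
proof -
  obtain z u w v where pq: "p = (z,u)" "q = (w,v)" by fastforce
  show ?thesis
    unfolding pq heis_rho_def heis_A_def heis_mult_def heis_inv_def rhoE_def
    by (simp add: complex_eq_iff cmod_power2) (simp add: power2_eq_square field_simps)
qed

lemma Re_rhoE: "Re (rhoE p q) = (Re (fst q - fst p))\<^sup>2 + (Im (fst q - fst p))\<^sup>2"
  unfolding rhoE_def by (simp add: power2_eq_square algebra_simps)

lemma Im_rhoE: "Im (rhoE p q) = - 4 * (snd q - snd p + Im (fst p * cnj (fst q)) / 2)"
  unfolding rhoE_def by (simp add: field_simps)

lemma rhoE_zero_iff: "rhoE p q = 0 \<longleftrightarrow> p = q"
proof
  assume "rhoE p q = 0"
  then have "Re (rhoE p q) = 0" "Im (rhoE p q) = 0" by simp_all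
  then have "Re (fst q - fst p) = 0" "Im (fst q - fst p) = 0" "snd q - snd p + Im (fst p * cnj (fst q)) / 2 = 0"
    unfolding Re_rhoE Im_rhoE by (simp_all add: add_nonneg_eq_0_iff)
  then have "fst q = fst p" by (simp add: complex_eq_iff)
  moreover then have "snd q = snd p" using \<open>snd q - snd p + _ = 0\<close> by (simp add: complex_mult_cnj)
  ultimately show "p = q" by (simp add: prod_eq_iff)
qed (simp add: rhoE_def complex_mult_cnj)

lemma rhoE_notnonpos: "p \<noteq> q \<Longrightarrow> rhoE p q \<notin> \<real>\<^sub>\<le>\<^sub>0"
proof
  assume "p \<noteq> q" "rhoE p q \<in> \<real>\<^sub>\<le>\<^sub>0"
  then have "Re (rhoE p q) \<le> 0" "Im (rhoE p q) = 0" by (auto simp: complex_nonpos_Reals_iff)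
  moreover have "Re (rhoE p q) \<ge> 0" unfolding Re_rhoE by simp
  ultimately have "rhoE p q = 0" by (simp add: complex_eq_iff)
  with \<open>p \<noteq> q\<close> show False by (simp add: rhoE_zero_iff)
qed

lemma rhoE_dq: "((\<lambda>q'. rhoE p q') has_derivative DqRho p q) (at q within X)"
  unfolding rhoE_def[abs_def] DqRho_def[abs_def]
  by (rule derivative_eq_intros refl | simp)+ (auto simp: fun_eq_iff algebra_simps)


lemma rhoE_dp: "((\<lambda>p'. rhoE p' q) has_derivative DpRho p q) (at p within X)"
  unfolding rhoE_def[abs_def] DpRho_def[abs_def]
  by (rule derivative_eq_intros refl | simp)+ (auto simp: fun_eq_iff algebra_simps)

lemma rhoE_d: "((\<lambda>x. rhoE (fst x) (snd x)) has_derivative (\<lambda>h. DpRho (fst x) (snd x) (fst h) + DqRho (fst x) (snd x) (snd h))) (at x within X)"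
  unfolding rhoE_def[abs_def] DpRho_def[abs_def] DqRho_def[abs_def]
  by (rule derivative_eq_intros refl | simp)+ (auto simp: fun_eq_iff complex_eq_iff field_simps)

lemma logrho_dq:
  assumes "p \<noteq> q"
  shows "((\<lambda>q'. logrho (p,q')) has_derivative (\<lambda>b. inverse (rhoE p q) * DqRho p q b)) (at q)"
proof -
  have e: "(\<lambda>q'. logrho (p,q')) = (\<lambda>q'. Ln (rhoE p q'))"
    by (simp add: logrho_def heis_rho_eq fun_eq_iff)
  have "(Ln has_derivative (*) (inverse (rhoE p q))) (at (rhoE p q))"
    using has_field_derivative_Ln[OF rhoE_notnonpos[OF assms]] by (simp add: has_field_derivative_def)
  from has_derivative_compose[OF rhoE_dq this] show ?thesis unfolding e .
qed

lemma dq_logrho: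
  assumes "p \<noteq> q"
  shows "d_q logrho (p,q) b = inverse (rhoE p q) * DqRho p q b"
  unfolding d_q_def using fd_eq[OF logrho_dq[OF assms]] by simp

lemma covec_eq: "covec l = (complex_of_real (l (1,0)) + \<i> * complex_of_real (l (\<i>,0)), l (0,1))"
  unfolding covec_def Basis_prod_def Basis_complex_def
  by (simp add: sum.union_disjoint sum.reindex inj_on_def complex_eq_iff)

definition Bf :: "heis \<times> heis \<Rightarrow> complex" where
  "Bf x = inverse (rhoE (fst x) (snd x))"

definition FE :: "heis \<times> heis \<Rightarrow> heis \<times> heis" where
  "FE x = (snd x, (complex_of_real (2 * Re (Bf x)) * (fst (snd x) - fst (fst x))
       - \<i> * complex_of_real (2 * Im (Bf x)) * fst (fst x), 4 * Im (Bf x)))"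

lemma F_H_eq:
  assumes "fst x \<noteq> snd x"
  shows "F_H x = FE x"
proof -
  obtain p q where x: "x = (p,q)" by (cases x) blast
  have pq: "p \<noteq> q" using assms x by simp
  show ?thesis
    unfolding x F_H_def FE_def alpha_H_def covec_eq Bf_def
    by (simp add: dq_logrho[OF pq] DqRho_def complex_eq_iff algebra_simps diff_divide_distrib)
qed


definition SS :: "(heis \<times> heis) set" where "SS = {x. fst x \<noteq> snd x}"
definition TT :: "(heis \<times> heis) set" where "TT = {y. snd y \<noteq> 0}"

lemma open_SS: "open SS"
  unfolding SS_def by (intro open_Collect_neq continuous_intros)
lemma open_TT: "open TT"
  unfolding TT_def by (intro open_Collect_neq continuous_intros)

lemma hd_rhoE[hd_intros]: "open S \<Longrightarrow> hd S (\<lambda>x. rhoE (fst x) (snd x)) n"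
  unfolding rhoE_def by (intro hd_intros)

lemma FE_smooth: "hd SS FE n"
  unfolding FE_def[abs_def] Bf_def
  by (intro hd_intros open_SS) (auto simp: SS_def rhoE_zero_iff)

definition etaG :: "heis \<times> heis \<Rightarrow> complex" where
  "etaG y = fst (snd y) + \<i> * complex_of_real (snd (snd y)) * fst (fst y) / 2"
definition BG :: "heis \<times> heis \<Rightarrow> complex" where
  "BG y = etaG y * cnj (etaG y) / 4 + \<i> * complex_of_real (snd (snd y) / 4)"
definition zG :: "heis \<times> heis \<Rightarrow> complex" where
  "zG y = fst (fst y) - etaG y * inverse (BG y) / 2"
definition TG :: "heis \<times> heis \<Rightarrow> real" where
  "TG y = - Im (inverse (BG y)) / 4"
definition uG :: "heis \<times> heis \<Rightarrow> real" where
  "uG y = snd (fst y) + Im (zG y * cnj (fst (fst y))) / 2 - TG y"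
definition GE :: "heis \<times> heis \<Rightarrow> heis \<times> heis" where
  "GE y = ((zG y, uG y), fst y)"

lemma Re_BG: "Re (BG y) = ((Re (etaG y))\<^sup>2 + (Im (etaG y))\<^sup>2) / 4"
  unfolding BG_def by (simp add: power2_eq_square)
lemma Im_BG: "Im (BG y) = snd (snd y) / 4"
  unfolding BG_def by simp

lemma BG_nz: "y \<in> TT \<Longrightarrow> BG y \<noteq> 0"
proof
  assume "y \<in> TT" "BG y = 0"
  then have "Re (BG y) = 0" "Im (BG y) = 0" by simp_all
  then have "Re (etaG y) = 0" "Im (etaG y) = 0" "snd (snd y) = 0"
    unfolding Re_BG Im_BG by (simp_all add: add_nonneg_eq_0_iff)
  then have "fst (snd y) = 0" "snd (snd y) = 0"
    unfolding etaG_def by (simp_all add: complex_eq_iff)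
  with \<open>y \<in> TT\<close> show False by (simp add: TT_def prod_eq_iff)
qed

lemma hd_BG[hd_intros]: "open S \<Longrightarrow> hd S BG n"
  unfolding BG_def[abs_def] etaG_def by (intro hd_intros)
lemma hd_etaG[hd_intros]: "open S \<Longrightarrow> hd S etaG n"
  unfolding etaG_def[abs_def] by (intro hd_intros)

lemma GE_smooth: "hd TT GE n"
  unfolding GE_def[abs_def] zG_def uG_def TG_def
  by (intro hd_intros open_TT) (auto simp: BG_nz)


lemma inv_norm_aux: "(Re (inverse c))\<^sup>2 + (Im (inverse c))\<^sup>2 = inverse ((Re c)\<^sup>2 + (Im c)\<^sup>2)"
proof (cases "c = 0")
  case False
  define d where "d = (Re c)\<^sup>2 + (Im c)\<^sup>2"
  have "d \<noteq> 0" using False by (simp add: d_def complex_eq_iff add_nonneg_eq_0_iff)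
  have "(Re (inverse c))\<^sup>2 + (Im (inverse c))\<^sup>2 = d / d\<^sup>2"
    by (simp add: inverse_complex.sel d_def[symmetric] power_divide add_divide_distrib) (metis d_def add_divide_distrib)
  also have "\<dots> = inverse d" using \<open>d \<noteq> 0\<close> by (simp add: power2_eq_square inverse_eq_divide)
  finally show ?thesis by (simp add: d_def)
qed simp

lemma Re_inv_norm: "Re (inverse c) = Re c * ((Re (inverse c))\<^sup>2 + (Im (inverse c))\<^sup>2)"
  unfolding inv_norm_aux by (simp add: inverse_complex.sel divide_inverse)

lemma Im_inv_norm: "Im (inverse c) = - Im c * ((Re (inverse c))\<^sup>2 + (Im (inverse c))\<^sup>2)"
  unfolding inv_norm_aux by (simp add: inverse_complex.sel divide_inverse)

lemma GF_aux:
  assumes "x \<in> SS"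
  shows "BG (FE x) = Bf x" "GE (FE x) = x"
proof -
  obtain z u w v where x: "x = ((z,u),(w,v))" by (cases x) auto
  define \<rho> where "\<rho> = rhoE (z,u) (w,v)"
  define B where "B = inverse \<rho>"
  have rnz: "\<rho> \<noteq> 0" using assms by (simp add: x SS_def \<rho>_def rhoE_zero_iff)
  have Bf: "Bf ((z,u),(w,v)) = B" by (simp add: Bf_def B_def \<rho>_def)
  have Bnz: "B \<noteq> 0" using rnz by (simp add: B_def)
  have eta: "etaG (FE x) = 2 * B * (w - z)"
    by (simp add: etaG_def FE_def x Bf complex_eq_iff algebra_simps)
  have k1: "Re B = ((Re (w - z))\<^sup>2 + (Im (w - z))\<^sup>2) * ((Re B)\<^sup>2 + (Im B)\<^sup>2)"
    using Re_inv_norm[of \<rho>] unfolding B_def \<rho>_def Re_rhoE by simp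
  have n2: "((Re (2*B*(w-z)))\<^sup>2 + (Im (2*B*(w-z)))\<^sup>2)/4 = ((Re (w - z))\<^sup>2 + (Im (w - z))\<^sup>2) * ((Re B)\<^sup>2 + (Im B)\<^sup>2)"
    by (simp add: power2_eq_square field_simps)
  show BG: "BG (FE x) = Bf x"
    unfolding complex_eq_iff Re_BG Im_BG eta n2 k1[symmetric]
    by (simp add: FE_def x Bf)
  have zG: "zG (FE x) = z"
    unfolding zG_def BG eta using Bnz by (simp add: FE_def x Bf field_simps)
  have ib: "inverse B = \<rho>" by (simp add: B_def)
  have TG: "TG (FE x) = v - u + Im (z * cnj w) / 2"
    unfolding TG_def BG by (simp add: x Bf ib \<rho>_def Im_rhoE)
  have uG: "uG (FE x) = u"
    unfolding uG_def zG TG by (simp add: FE_def x)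
  show "GE (FE x) = x"
    unfolding GE_def zG uG by (simp add: FE_def x)
qed


lemma FG_aux:
  assumes "y \<in> TT"
  shows "rhoE (fst (GE y)) (snd (GE y)) = inverse (BG y)" "FE (GE y) = y"
proof -
  obtain w v a c where y: "y = ((w,v),(a,c))" by (cases y) auto
  define B where "B = BG y"
  define \<eta> where "\<eta> = etaG y"
  define iB where "iB = inverse B"
  have Bnz: "B \<noteq> 0" using BG_nz[OF assms] by (simp add: B_def)
  have ImB: "Im B = c / 4" by (simp add: B_def Im_BG y)
  have eta: "\<eta> = a + \<i> * complex_of_real c * w / 2" by (simp add: \<eta>_def etaG_def y)
  have wz: "w - zG y = \<eta> * iB / 2" by (simp add: zG_def y \<eta>_def iB_def B_def)
  have T: "v - uG y + Im (zG y * cnj w) / 2 = TG y" by (simp add: uG_def y)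
  have r1: "Re ((\<eta> * iB / 2) * cnj (\<eta> * iB / 2)) = ((Re \<eta>)\<^sup>2 + (Im \<eta>)\<^sup>2) * ((Re iB)\<^sup>2 + (Im iB)\<^sup>2) / 4"
    by (simp add: power2_eq_square field_simps)
  have r2: "Re iB = ((Re \<eta>)\<^sup>2 + (Im \<eta>)\<^sup>2) * ((Re iB)\<^sup>2 + (Im iB)\<^sup>2) / 4"
    using Re_inv_norm[of B] unfolding iB_def Re_BG B_def \<eta>_def by simp
  have rho: "rhoE (fst (GE y)) (snd (GE y)) = iB"
  proof -
    have "rhoE (fst (GE y)) (snd (GE y)) = (w - zG y) * cnj (w - zG y) - 4 * \<i> * complex_of_real (TG y)"
      unfolding rhoE_def GE_def T[symmetric] by (simp add: y)
    also have "\<dots> = iB"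
    proof (rule complex_eqI)
      have "Re ((\<eta> * iB / 2) * cnj (\<eta> * iB / 2) - 4 * \<i> * complex_of_real (TG y)) = Re ((\<eta> * iB / 2) * cnj (\<eta> * iB / 2))"
        by simp
      then show "Re ((w - zG y) * cnj (w - zG y) - 4 * \<i> * complex_of_real (TG y)) = Re iB"
        unfolding wz r1 r2[symmetric] .
      have "Im (A * cnj A - 4 * \<i> * complex_of_real t) = - 4 * t" for A t
        by (simp add: algebra_simps)
      then show "Im ((w - zG y) * cnj (w - zG y) - 4 * \<i> * complex_of_real (TG y)) = Im iB"
        unfolding TG_def B_def[symmetric] iB_def[symmetric] by (simp only: )
    qed
    finally show ?thesis .
  qed
  then show "rhoE (fst (GE y)) (snd (GE y)) = inverse (BG y)" by (simp add: iB_def B_def)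
  have Bf: "Bf (GE y) = B" using rho by (simp add: Bf_def iB_def)
  have reB: "complex_of_real (Re B) + \<i> * complex_of_real (Im B) = B" by (simp add: complex_eq_iff)
  have "complex_of_real (2 * Re B) * (w - zG y) - \<i> * complex_of_real (2 * Im B) * zG y
      = \<eta> * iB * (complex_of_real (Re B) + \<i> * complex_of_real (Im B)) - 2 * \<i> * complex_of_real (Im B) * w"
  proof -
    have zG': "zG y = w - \<eta> * iB / 2" using wz by (metis add_diff_cancel_left' diff_add_cancel)
    show ?thesis unfolding zG' by (simp add: algebra_simps)
  qed
  also have "\<dots> = a"
    unfolding reB using Bnz by (simp add: iB_def eta ImB field_simps)
  finally have 1: "complex_of_real (2 * Re B) * (w - zG y) - \<i> * complex_of_real (2 * Im B) * zG y = a" .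
  show "FE (GE y) = y"
    unfolding FE_def Bf using 1 by (simp add: GE_def y ImB)
qed


lemma FE_TT: "x \<in> SS \<Longrightarrow> FE x \<in> TT"
proof (rule ccontr)
  assume x: "x \<in> SS" and "FE x \<notin> TT"
  then have "snd (FE x) = 0" by (simp add: TT_def)
  then have "BG (FE x) = 0" by (simp add: BG_def etaG_def)
  moreover have "Bf x \<noteq> 0" using x by (cases x) (simp add: Bf_def SS_def rhoE_zero_iff)
  ultimately show False using GF_aux(1)[OF x] by simp
qed

lemma GE_SS: "y \<in> TT \<Longrightarrow> GE y \<in> SS"
  using FG_aux(1)[of y] BG_nz[of y] rhoE_zero_iff[of "fst (GE y)" "snd (GE y)"]
  by (auto simp: SS_def)

lemma part1: "diffeomorphism_betw {(p, q). p \<noteq> q} {(q, \<xi>). \<xi> \<noteq> 0} F_H"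
proof -
  have S: "{(p, q). p \<noteq> q} = SS" by (auto simp: SS_def)
  have T: "{(q, \<xi>). \<xi> \<noteq> (0::heis)} = TT" by (auto simp: TT_def)
  have FH: "F_H x = FE x" if "x \<in> SS" for x using that F_H_eq by (simp add: SS_def)
  have sF: "smooth_on SS F_H"
    unfolding smooth_on_def
    using hd_transfer[OF open_SS, of FE F_H] FH FE_smooth by auto
  have sG: "smooth_on TT GE"
    unfolding smooth_on_def using GE_smooth by auto
  have imF: "F_H ` SS = TT"
  proof
    show "F_H ` SS \<subseteq> TT" using FH FE_TT by auto
    show "TT \<subseteq> F_H ` SS"
    proof
      fix y assume "y \<in> TT"
      then have "y = F_H (GE y)" "GE y \<in> SS" using FG_aux(2) FH GE_SS by auto
      then show "y \<in> F_H ` SS" by blast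
    qed
  qed
  have imG: "GE ` TT = SS"
  proof
    show "GE ` TT \<subseteq> SS" using GE_SS by auto
    show "SS \<subseteq> GE ` TT"
    proof
      fix x assume "x \<in> SS"
      then have "x = GE (FE x)" "FE x \<in> TT" using GF_aux(2) FE_TT by auto
      then show "x \<in> GE ` TT" by blast
    qed
  qed
  show ?thesis
    unfolding S T diffeomorphism_betw_def
  proof (intro conjI sF imF exI[of _ GE] sG imG ballI)
    fix x assume "x \<in> SS" then show "GE (F_H x) = x" using FH GF_aux(2) by simp
  next
    fix y assume "y \<in> TT" then show "F_H (GE y) = y" using FH FG_aux(2) GE_SS by simp
  qed
qed



definition DpqRho :: "heis \<Rightarrow> heis \<Rightarrow> complex" where
  "DpqRho a b = - (fst b * cnj (fst a)) - fst a * cnj (fst b)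
     - 4 * \<i> * complex_of_real (Im (fst a * cnj (fst b)) / 2)"

lemma DqRho_dp: "((\<lambda>p'. DqRho p' q b) has_derivative (\<lambda>a. DpqRho a b)) (at p)"
  unfolding DqRho_def[abs_def] DpqRho_def[abs_def]
  by (rule derivative_eq_intros refl | simp)+ (auto simp: fun_eq_iff algebra_simps)

lemma dp_dq_logrho:
  assumes "p \<noteq> q"
  shows "d_p (\<lambda>x. d_q logrho x b) (p,q) a =
     inverse (rhoE p q) * DpqRho a b + - (inverse (rhoE p q) * DpRho p q a * inverse (rhoE p q)) * DqRho p q b"
proof -
  have nz: "rhoE p q \<noteq> 0" using assms by (simp add: rhoE_zero_iff)
  have h: "((\<lambda>p'. inverse (rhoE p' q) * DqRho p' q b) has_derivative
      (\<lambda>a. inverse (rhoE p q) * DpqRho a b + - (inverse (rhoE p q) * DpRho p q a * inverse (rhoE p q)) * DqRho p q b)) (at p)"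
    by (rule has_derivative_mult[OF Deriv.has_derivative_inverse[OF nz rhoE_dp] DqRho_dp])
  have o: "open {p'. p' \<noteq> q}" by (simp add: open_Collect_neq)
  have h2: "((\<lambda>p'. d_q logrho (p', q) b) has_derivative
      (\<lambda>a. inverse (rhoE p q) * DpqRho a b + - (inverse (rhoE p q) * DpRho p q a * inverse (rhoE p q)) * DqRho p q b)) (at p)"
    by (rule has_derivative_transform_within_open[OF h o]) (use assms dq_logrho in auto)
  show ?thesis unfolding d_p_def using fd_eq[OF h2] by simp
qed

definition DB :: "heis \<times> heis \<Rightarrow> heis \<times> heis \<Rightarrow> complex" where
  "DB x h = - (Bf x * (DpRho (fst x) (snd x) (fst h) + DqRho (fst x) (snd x) (snd h)) * Bf x)"

definition DFE :: "heis \<times> heis \<Rightarrow> heis \<times> heis \<Rightarrow> heis \<times> heis" where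
  "DFE x h = (snd h, (complex_of_real (2 * Re (DB x h)) * (fst (snd x) - fst (fst x))
       + complex_of_real (2 * Re (Bf x)) * (fst (snd h) - fst (fst h))
       - \<i> * complex_of_real (2 * Im (DB x h)) * fst (fst x)
       - \<i> * complex_of_real (2 * Im (Bf x)) * fst (fst h), 4 * Im (DB x h)))"

lemma Bf_deriv:
  assumes "x \<in> SS"
  shows "(Bf has_derivative DB x) (at x within X)"
proof -
  have nz: "rhoE (fst x) (snd x) \<noteq> 0" using assms by (simp add: SS_def rhoE_zero_iff)
  show ?thesis
    unfolding Bf_def[abs_def] DB_def[abs_def] Bf_def
    by (rule Deriv.has_derivative_inverse[OF nz rhoE_d])
qed

lemma FE_deriv:
  assumes "x \<in> SS"
  shows "(FE has_derivative DFE x) (at x)"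
  unfolding FE_def[abs_def] DFE_def[abs_def]
  by (rule derivative_eq_intros Bf_deriv[OF assms] refl | simp)+ (auto simp: fun_eq_iff algebra_simps)


definition Xi :: "complex \<Rightarrow> heis \<times> heis \<Rightarrow> heis" where
  "Xi D x = (complex_of_real (2 * Re D) * (fst (snd x) - fst (fst x)) - \<i> * complex_of_real (2 * Im D) * fst (fst x), 4 * Im D)"

definition Lf :: "complex \<Rightarrow> heis \<times> heis \<Rightarrow> complex" where
  "Lf B h = complex_of_real (2 * Re B) * (fst (snd h) - fst (fst h)) - \<i> * complex_of_real (2 * Im B) * fst (fst h)"

definition Dqq :: "heis \<Rightarrow> heis \<Rightarrow> complex" where
  "Dqq b c = fst c * cnj (fst b) + fst b * cnj (fst c)"

lemma Dqq_sym: "Dqq b c = Dqq c b"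
  unfolding Dqq_def by (simp add: algebra_simps)

lemma DFE_split: "snd (DFE x h) = Xi (DB x h) x + (Lf (Bf x) h, 0)"
  unfolding DFE_def Xi_def Lf_def by (simp add: algebra_simps)

lemma Xi_inner: "Xi D x \<bullet> c = Re (D * DqRho (fst x) (snd x) c)"
proof -
  obtain z u w v where x: "x = ((z,u),(w,v))" by (cases x) auto
  obtain c1 c2 where c: "c = (c1,c2)" by (cases c) auto
  show ?thesis unfolding x c Xi_def DqRho_def
    by (simp add: inner_complex_def field_simps)
qed

lemma Lf_inner: "(Lf B h, 0) \<bullet> c = Re (B * (DpqRho (fst h) c + Dqq (snd h) c))"
proof -
  obtain a1 a2 b1 b2 where h: "h = ((a1,a2),(b1,b2))" by (cases h) auto
  obtain c1 c2 where c: "c = (c1,c2)" by (cases c) auto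
  show ?thesis unfolding h c Lf_def DpqRho_def Dqq_def
    by (simp add: inner_complex_def field_simps)
qed

lemma part2:
  assumes "p \<noteq> q"
  shows "Re (Omega_H (p, q) v w) = pullback2 F_H canonical_symplectic (p, q) v w"
proof -
  obtain a b where v: "v = (a,b)" by (cases v) blast
  obtain a' b' where w: "w = (a',b')" by (cases w) blast
  have x: "(p,q) \<in> SS" using assms by (simp add: SS_def)
  have FH: "F_H y = FE y" if "y \<in> SS" for y using that F_H_eq by (simp add: SS_def)
  have dF: "(F_H has_derivative DFE (p,q)) (at (p,q))"
    by (rule has_derivative_transform_within_open[OF FE_deriv[OF x] open_SS x]) (simp add: FH)
  have fd: "frechet_derivative F_H (at (p,q)) = DFE (p,q)" by (rule fd_eq[OF dF])
  have Bf: "inverse (rhoE p q) = Bf (p,q)" by (simp add: Bf_def)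
  define B where "B = Bf (p,q)"
  have lhs: "Omega_H (p, q) v w = (B * DpqRho a b' + - (B * DpRho p q a * B) * DqRho p q b')
     - (B * DpqRho a' b + - (B * DpRho p q a' * B) * DqRho p q b)"
    unfolding Omega_H_def v w B_def by (simp add: dp_dq_logrho[OF assms] Bf)
  have rhs: "pullback2 F_H canonical_symplectic (p, q) v w =
     Re (DB (p,q) (a,b) * DqRho p q b' + B * (DpqRho a b' + Dqq b b'))
     - Re (DB (p,q) (a',b') * DqRho p q b + B * (DpqRho a' b + Dqq b' b))"
  proof -
    have "pullback2 F_H canonical_symplectic (p, q) v w = snd (DFE (p,q) (a,b)) \<bullet> b' - snd (DFE (p,q) (a',b')) \<bullet> b"
      unfolding pullback2_def fd v w by (simp add: canonical_symplectic_def DFE_def)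
    then show ?thesis
      unfolding DFE_split inner_add_left Xi_inner Lf_inner B_def by simp
  qed
  have "(B * DpqRho a b' + - (B * DpRho p q a * B) * DqRho p q b')
     - (B * DpqRho a' b + - (B * DpRho p q a' * B) * DqRho p q b)
     = (DB (p,q) (a,b) * DqRho p q b' + B * (DpqRho a b' + Dqq b b'))
     - (DB (p,q) (a',b') * DqRho p q b + B * (DpqRho a' b + Dqq b' b))"
    unfolding DB_def B_def[symmetric] using Dqq_sym[of b b'] by (simp add: algebra_simps)
  then show ?thesis unfolding lhs rhs by (metis minus_complex.sel)
qed


theorem proposition6p4:
  shows "diffeomorphism_betw {(p, q). p \<noteq> q} {(q, \<xi>). \<xi> \<noteq> 0} F_H
     \<and> (\<forall>p q v w. p \<noteq> q \<longrightarrow>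
          Re (Omega_H (p, q) v w) = pullback2 F_H canonical_symplectic (p, q) v w)"
  using part1 part2 by blast

end
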